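(* Let $A=(S,f_c,f_d)$ be any self-similar cellular automaton with $\{0,1\}\subseteq S$, and let $k_0\ge 0$. Let $\mathcal{C}$ be the set of configurations $c:\mathbb{Z}\to\{0,1\}$ that are either the all-zero configuration $0^\infty$ or have exactly one cell equal to $1$, that cell having positive index. Then it is impossible that, for every $c\in\mathcal{C}$, the state of cycle $(0,k_0)$ is deterministic for initial configuration $c$ and its common value equals $1$ when $c\neq 0^\infty$ and equals $0$ when $c=0^\infty$.
   Context: A self-similar cellular automaton is a triple $A=(S,f_c,f_d)$ with $S$ a finite set of states and $f_c,f_d:S^3\to S$. Cells are indexed by $j\in\mathbb{Z}$; cell $j$ has cycles $[k/2^j,(k+1)/2^j)$, and the $k$-th cycle of cell $j$ is identified with the pair $(j,k)$. The automaton is started at time $0$; the set of cycles is $C=\{(i,k): i\in\mathbb{Z},\ k\in\mathbb{Z}_{\ge 0}\}$. Given an initial configuration $c:\mathbb{Z}\to S$, an evolution of $A$ from $c$ is a map $s:C\to S$ with $s(i,0)=c(i)$ for all $i$ and, for all $(i,k)$ with $k\ge1$, $s(i,k)=f_c\big(s(i-1,\lfloor (k-1)/2\rfloor),s(i,k-1),s(i+1,2k-1)\big)$ if $k$ is even and $s(i,k)=f_d(\text{same arguments})$ if $k$ is odd. The state of cycle $(i_0,k_0)$ is deterministic for initial configuration $c$ if $s(i_0,k_0)$ takes the same value for all evolutions $s$ of $A$ from $c$ (its common value). *)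

theory Defs
  imports Main
begin

text \<open>A self-similar cellular automaton: finite state type 'a, rules fc, fd.
  Cycle (i,k) is represented by arguments i::int, k::nat.\<close>

definition is_evolution ::
  "('a \<Rightarrow> 'a \<Rightarrow> 'a \<Rightarrow> 'a) \<Rightarrow> ('a \<Rightarrow> 'a \<Rightarrow> 'a \<Rightarrow> 'a) \<Rightarrow> (int \<Rightarrow> 'a) \<Rightarrow> (int \<Rightarrow> nat \<Rightarrow> 'a) \<Rightarrow> bool" where
  "is_evolution fc fd c s \<longleftrightarrow>
     (\<forall>i. s i 0 = c i) \<and>
     (\<forall>i k. k \<ge> 1 \<longrightarrow>
        s i k = (if even k then fc else fd)
                  (s (i - 1) ((k - 1) div 2)) (s i (k - 1)) (s (i + 1) (2 * k - 1)))"

definition deterministic ::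
  "('a \<Rightarrow> 'a \<Rightarrow> 'a \<Rightarrow> 'a) \<Rightarrow> ('a \<Rightarrow> 'a \<Rightarrow> 'a \<Rightarrow> 'a) \<Rightarrow> (int \<Rightarrow> 'a) \<Rightarrow> int \<Rightarrow> nat \<Rightarrow> bool" where
  "deterministic fc fd c i0 k0 \<longleftrightarrow>
     (\<forall>s s'. is_evolution fc fd c s \<longrightarrow> is_evolution fc fd c s' \<longrightarrow> s i0 k0 = s' i0 k0)"

definition deterministic_with_value ::
  "('a \<Rightarrow> 'a \<Rightarrow> 'a \<Rightarrow> 'a) \<Rightarrow> ('a \<Rightarrow> 'a \<Rightarrow> 'a \<Rightarrow> 'a) \<Rightarrow> (int \<Rightarrow> 'a) \<Rightarrow> int \<Rightarrow> nat \<Rightarrow> 'a \<Rightarrow> bool" where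
  "deterministic_with_value fc fd c i0 k0 v \<longleftrightarrow>
     deterministic fc fd c i0 k0 \<and> (\<exists>s. is_evolution fc fd c s \<and> s i0 k0 = v)"


end

theory Submission
  imports Defs "HOL-Library.Diagonal_Subsequence" "HOL-Library.Countable" "HOL-Library.Infinite_Set"
begin

lemma const_subseq:
  fixes g :: "nat \<Rightarrow> 'a::finite"
  assumes "strict_mono (s::nat\<Rightarrow>nat)"
  shows "\<exists>r'::nat\<Rightarrow>nat. strict_mono r' \<and> (\<forall>m. g ((s \<circ> r') m) = g ((s \<circ> r') 0))"
proof -
  have "finite (range (\<lambda>m. g (s m)))" by simp
  then obtain y where y: "infinite ((\<lambda>m. g (s m)) -` {y})"
    using inf_img_fin_domE[of "\<lambda>m. g (s m)" UNIV] by auto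
  let ?S = "(\<lambda>m. g (s m)) -` {y}"
  have sm: "strict_mono (enumerate ?S)" using strict_mono_enumerate[OF y] .
  have "\<forall>m. g (s (enumerate ?S m)) = y" using enumerate_in_set[OF y] by auto
  then have "\<forall>m. g ((s \<circ> enumerate ?S) m) = g ((s \<circ> enumerate ?S) 0)" by simp
  with sm show ?thesis by blast
qed

lemma compactness:
  fixes t :: "nat \<Rightarrow> int \<Rightarrow> nat \<Rightarrow> 'a::finite"
  shows "\<exists>(d::nat\<Rightarrow>nat) L. strict_mono d \<and> (\<forall>i k. \<exists>N. \<forall>m\<ge>N. t (d m) i k = L i k)"
proof -
  define g where "g q n = (case from_nat n of (i, k) \<Rightarrow> t q i k)" for q n
  define P where "P n r = (\<forall>m. g (r m) n = g (r 0) n)" for n and r :: "nat \<Rightarrow> nat"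
  interpret subseqs P
  proof
    fix n and s :: "nat \<Rightarrow> nat" assume "strict_mono s"
    from const_subseq[OF this, of "\<lambda>q. g q n"] show "\<exists>r'. strict_mono r' \<and> P n (s \<circ> r')"
      unfolding P_def by auto
  qed
  have stable: "\<And>r s n. strict_mono r \<Longrightarrow> P n s \<Longrightarrow> P n (s \<circ> r)"
    unfolding P_def by (metis comp_apply)
  define L where "L i k = t (diagseq (Suc (to_nat (i, k)))) i k" for i k
  have conv: "\<forall>i k. \<exists>N. \<forall>m\<ge>N. t (diagseq m) i k = L i k"
  proof (intro allI)
    fix i k
    let ?n = "to_nat (i::int, k::nat)"
    have h: "P ?n (diagseq \<circ> ((+) (Suc ?n)))" using diagseq_holds[OF stable] .
    show "\<exists>N. \<forall>m\<ge>N. t (diagseq m) i k = L i k"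
    proof (intro exI allI impI)
      fix m assume "Suc ?n \<le> m"
      then obtain p where m: "m = Suc ?n + p" using le_Suc_ex by blast
      from h have "g (diagseq (Suc ?n + p)) ?n = g (diagseq (Suc ?n + 0)) ?n"
        unfolding P_def by (metis comp_apply)
      then show "t (diagseq m) i k = L i k" unfolding m L_def g_def by simp
    qed
  qed
  show ?thesis
    apply (rule exI[of _ diagseq])
    apply (rule exI[of _ L])
    using conv subseq_diagseq by blast
qed

theorem mainTheorem4:
  fixes fc fd :: "'a::finite \<Rightarrow> 'a \<Rightarrow> 'a \<Rightarrow> 'a"
    and zero one :: 'a
    and k0 :: nat
  assumes "zero \<noteq> one"
  shows "\<not> (deterministic_with_value fc fd (\<lambda>_. zero) 0 k0 zero \<and>
             (\<forall>j::int. j > 0 \<longrightarrow>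
                deterministic_with_value fc fd (\<lambda>i. if i = j then one else zero) 0 k0 one))"
proof
  assume H: "deterministic_with_value fc fd (\<lambda>_. zero) 0 k0 zero \<and>
             (\<forall>j::int. j > 0 \<longrightarrow>
                deterministic_with_value fc fd (\<lambda>i. if i = j then one else zero) 0 k0 one)"
  define c where "c j = (\<lambda>i::int. if i = j then one else zero)" for j :: int
  have ex: "\<forall>m::nat. \<exists>s. is_evolution fc fd (c (int m + 1)) s \<and> s 0 k0 = one"
  proof
    fix m :: nat
    from H have "\<forall>j::int. j>0 \<longrightarrow> deterministic_with_value fc fd (c j) 0 k0 one"
      unfolding c_def by blast
    then have "deterministic_with_value fc fd (c (int m + 1)) 0 k0 one" by simp
    then show "\<exists>s. is_evolution fc fd (c (int m + 1)) s \<and> s 0 k0 = one"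
      unfolding deterministic_with_value_def by blast
  qed
  define t where "t m = (SOME s. is_evolution fc fd (c (int m + 1)) s \<and> s 0 k0 = one)" for m
  have t: "is_evolution fc fd (c (int m + 1)) (t m) \<and> t m 0 k0 = one" for m
    unfolding t_def using someI_ex[OF ex[rule_format, of m]] by blast
  obtain d :: "nat \<Rightarrow> nat" and L where d: "strict_mono d" and L: "\<forall>i k. \<exists>N. \<forall>m\<ge>N. t (d m) i k = L i k"
    using compactness[of t] by blast
  have dge: "m \<le> d m" for m using d by (simp add: strict_mono_imp_increasing)
  have evL: "is_evolution fc fd (\<lambda>_. zero) L"
    unfolding is_evolution_def
  proof (intro conjI allI impI)
    fix i
    obtain N where N: "\<forall>m\<ge>N. t (d m) i 0 = L i 0" using L by blast
    let ?m = "max N (nat i)"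
    have "t (d ?m) i 0 = c (int (d ?m) + 1) i" using t unfolding is_evolution_def by blast
    moreover have "int (d ?m) + 1 \<noteq> i" using dge[of ?m] by linarith
    ultimately show "L i 0 = zero" using N c_def by auto
  next
    fix i :: int and k :: nat assume k: "1 \<le> k"
    obtain N1 where N1: "\<forall>m\<ge>N1. t (d m) i k = L i k" using L by blast
    obtain N2 where N2: "\<forall>m\<ge>N2. t (d m) (i - 1) ((k - 1) div 2) = L (i - 1) ((k - 1) div 2)" using L by blast
    obtain N3 where N3: "\<forall>m\<ge>N3. t (d m) i (k - 1) = L i (k - 1)" using L by blast
    obtain N4 where N4: "\<forall>m\<ge>N4. t (d m) (i + 1) (2 * k - 1) = L (i + 1) (2 * k - 1)" using L by blast
    let ?m = "max (max N1 N2) (max N3 N4)"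
    have "t (d ?m) i k = (if even k then fc else fd)
                  (t (d ?m) (i - 1) ((k - 1) div 2)) (t (d ?m) i (k - 1)) (t (d ?m) (i + 1) (2 * k - 1))"
      using t k unfolding is_evolution_def by blast
    then show "L i k = (if even k then fc else fd)
                  (L (i - 1) ((k - 1) div 2)) (L i (k - 1)) (L (i + 1) (2 * k - 1))"
      using N1[rule_format, of ?m] N2[rule_format, of ?m] N3[rule_format, of ?m] N4[rule_format, of ?m]
      by (simp only: max.cobounded1 max.cobounded2 max.coboundedI1 max.coboundedI2 le_refl)
  qed
  have "L 0 k0 = one"
  proof -
    obtain N where "\<forall>m\<ge>N. t (d m) 0 k0 = L 0 k0" using L by blast
    then show ?thesis using t[of "d N"] by auto
  qed
  moreover obtain s0 where "is_evolution fc fd (\<lambda>_. zero) s0" "s0 0 k0 = zero"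
    using H unfolding deterministic_with_value_def by blast
  moreover have "deterministic fc fd (\<lambda>_. zero) 0 k0"
    using H unfolding deterministic_with_value_def by blast
  ultimately show False using evL assms unfolding deterministic_def by metis
qed

end
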